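(* Assume $w(C)=f(|C|)$ for all $C\in\mathcal I$, for some positive function $f$. Let $\mathcal I=\{C\subset[K]\setminus\mathcal Y_0:\ k_0\le|C|\le K_0\}$ for some $0\le k_0\le K_0\le K$ and a (possibly empty) excluded set $\mathcal Y_0\subset[K]$ with $\mathcal Y_0\ne[K]$. Then for every $x\in\mathcal X$ and all $0\le\mu_1<\mu_2$, $C^{\mu_1}(x)\subseteq C^{\mu_2}(x)$.
   Context: Classification setting: $\mathcal Y=[K]=\{1,\dots,K\}$, $\alpha\in(0,1)$. For each $x$ and $k\in[K]$, $\hat P(Y=k\mid X=x)$ is a fixed estimated class probability, and $\hat p_C(x)=\sum_{k\in C}\hat P(Y=k\mid X=x)$ for $C\subseteq[K]$. $\mathcal I$ is enumerated in a fixed lexicographic order. For $\mu\ge0$ let $\hat\ell_{x,C}(\mu)=w(C)\hat p_C(x)+\mu(\hat p_C(x)-(1-\alpha))$. $C^\mu(x)$ is a maximizer of $\hat\ell_{x,C}(\mu)$ over $C\in\mathcal I$, with ties broken in favor of the smallest weight $w(C)$ and then the smallest index in the ordering. *)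

theory Defs
  imports Complex_Main
begin

text \<open>Estimated probability mass of a label set: hat p_C(x) = sum over k in C of hat P(Y=k | X=x).
  Here p stands for the function k maps to hat P(Y=k | X=x) at a fixed x.\<close>
definition pC :: "(nat \<Rightarrow> real) \<Rightarrow> nat set \<Rightarrow> real" where
  "pC p C = (\<Sum>k\<in>C. p k)"

definition ell :: "(nat set \<Rightarrow> real) \<Rightarrow> (nat \<Rightarrow> real) \<Rightarrow> real \<Rightarrow> real \<Rightarrow> nat set \<Rightarrow> real" where
  "ell w p alpha mu C = w C * pC p C + mu * (pC p C - (1 - alpha))"

definition lex_less :: "nat set \<Rightarrow> nat set \<Rightarrow> bool" where
  "lex_less A B \<longleftrightarrow> (sorted_list_of_set A, sorted_list_of_set B) \<in> lexord {(a, b). a < b}"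

definition is_Cmu :: "nat set set \<Rightarrow> (nat set \<Rightarrow> real) \<Rightarrow> (nat \<Rightarrow> real) \<Rightarrow> real \<Rightarrow> real \<Rightarrow> nat set \<Rightarrow> bool" where
  "is_Cmu I w p alpha mu C \<longleftrightarrow> C \<in> I \<and>
     (\<forall>C'\<in>I. C' \<noteq> C \<longrightarrow>
        ell w p alpha mu C' < ell w p alpha mu C \<or>
        (ell w p alpha mu C' = ell w p alpha mu C \<and>
          (w C < w C' \<or> (w C = w C' \<and> lex_less C C'))))"

end

theory Submission
  imports Defs
begin

lemma sl_split:
  fixes L R :: "nat set"
  assumes "finite L" "finite R" "\<forall>x\<in>L. \<forall>y\<in>R. x < y"
  shows "sorted_list_of_set (L \<union> R) = sorted_list_of_set L @ sorted_list_of_set R"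
proof (rule sorted_distinct_set_unique)
  show "sorted (sorted_list_of_set L @ sorted_list_of_set R)"
    using assms by (auto simp: sorted_append less_imp_le)
  show "distinct (sorted_list_of_set L @ sorted_list_of_set R)"
    using assms by auto
qed (use assms in auto)

lemma lex_asym: "lex_less A B \<Longrightarrow> lex_less B A \<Longrightarrow> False"
proof -
  have "asym {(a::nat, b). a < b}" by (auto intro: asymI)
  then show "lex_less A B \<Longrightarrow> lex_less B A \<Longrightarrow> False"
    unfolding lex_less_def using lexord_asymmetric by blast
qed

lemma lex_swap:
  fixes A :: "nat set"
  assumes "finite A" "a \<in> A" "b \<notin> A" "b < a"
  shows "lex_less (insert b (A - {a})) A"
proof -
  define L where "L = {x\<in>A. x < b}"
  define R where "R = {x\<in>A. b < x}"
  define R' where "R' = R - {a}"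
  have fL: "finite L" "finite R" "finite R'" using assms by (auto simp: L_def R_def R'_def)
  have bA: "\<forall>x\<in>A. x < b \<or> b < x" using assms(3) by (metis linorder_neqE_nat)
  have A: "A = L \<union> R" using assms bA by (auto simp: L_def R_def)
  have A': "insert b (A - {a}) = L \<union> ({b} \<union> R')" using assms by (auto simp: L_def R_def R'_def)
  have Rne: "R \<noteq> {}" using assms by (auto simp: R_def)
  have mR: "b < Min R" using Rne fL by (auto simp: R_def)
  have e1: "sorted_list_of_set A = sorted_list_of_set L @ (Min R # sorted_list_of_set (R - {Min R}))"
    unfolding A using fL Rne bA by (subst sl_split) (auto simp: L_def R_def sorted_list_of_set_nonempty)
  have e2: "sorted_list_of_set (insert b (A - {a})) = sorted_list_of_set L @ (b # sorted_list_of_set R')"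
  proof -
    have m: "Min (insert b R') = b" using fL by (auto simp: R'_def R_def intro!: Min_eqI)
    have r: "insert b R' - {b} = R'" by (auto simp: R'_def R_def)
    have e3: "sorted_list_of_set (insert b R') = b # sorted_list_of_set R'"
      using sorted_list_of_set_nonempty[of "insert b R'"] fL m r by simp
    show ?thesis unfolding A' using fL e3
      by (subst sl_split) (auto simp: L_def R_def R'_def)
  qed
  show ?thesis unfolding lex_less_def e1 e2
    by (rule lexord_append_left_rightI) (use mR in auto)
qed


lemma samesize:
  assumes "is_Cmu I w p alpha mu C" "D \<in> I" "D \<noteq> C" "w D = w C" "0 < w C + mu"
  shows "pC p D < pC p C \<or> (pC p D = pC p C \<and> lex_less C D)"
proof -
  have h: "ell w p alpha mu D - ell w p alpha mu C = (w C + mu) * (pC p D - pC p C)"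
    using assms(4) by (simp add: ell_def algebra_simps)
  from assms(1-3) have "ell w p alpha mu D < ell w p alpha mu C \<or>
        (ell w p alpha mu D = ell w p alpha mu C \<and>
          (w C < w D \<or> (w C = w D \<and> lex_less C D)))" unfolding is_Cmu_def by blast
  then show ?thesis
  proof
    assume "ell w p alpha mu D < ell w p alpha mu C"
    then have "(w C + mu) * (pC p D - pC p C) < 0" using h by linarith
    then have "pC p D - pC p C < 0" using assms(5) by (simp add: mult_less_0_iff)
    then show ?thesis by simp
  next
    assume e: "ell w p alpha mu D = ell w p alpha mu C \<and> (w C < w D \<or> (w C = w D \<and> lex_less C D))"
    then have "(w C + mu) * (pC p D - pC p C) = 0" using h by linarith
    then have "pC p D = pC p C" using assms(5) by simp
    then show ?thesis using e assms(4) by simp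
  qed
qed

theorem proposition12:
  fixes K k0 K0 :: nat and Y0 :: "nat set" and f :: "nat \<Rightarrow> real"
    and w :: "nat set \<Rightarrow> real" and phat :: "'x \<Rightarrow> nat \<Rightarrow> real"
    and alpha :: real and x :: 'x and mu1 mu2 :: real and C1 C2 :: "nat set"
  defines "I \<equiv> {C. C \<subseteq> {1..K} - Y0 \<and> k0 \<le> card C \<and> card C \<le> K0}"
  assumes "0 < alpha" and "alpha < 1"
    and "\<forall>x. \<forall>k\<in>{1..K}. 0 \<le> phat x k"
    and "\<forall>x. (\<Sum>k\<in>{1..K}. phat x k) = 1"
    and "k0 \<le> K0" and "K0 \<le> K"
    and "Y0 \<subseteq> {1..K}" and "Y0 \<noteq> {1..K}"
    and "\<forall>n. 0 < f n"
    and "\<forall>C\<in>I. w C = f (card C)"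
    and "0 \<le> mu1" and "mu1 < mu2"
    and "is_Cmu I w (phat x) alpha mu1 C1"
    and "is_Cmu I w (phat x) alpha mu2 C2"
  shows "C1 \<subseteq> C2"
proof (rule ccontr)
  assume nsub: "\<not> C1 \<subseteq> C2"
  let ?p = "phat x"
  note c1 = assms(14)[unfolded is_Cmu_def] and c2 = assms(15)[unfolded is_Cmu_def]
  have C1I: "C1 \<in> I" and C2I: "C2 \<in> I" using c1 c2 by auto
  have subK: "\<And>C. C \<in> I \<Longrightarrow> C \<subseteq> {1..K}" unfolding I_def by auto
  have finI: "\<And>C. C \<in> I \<Longrightarrow> finite C" using subK finite_subset by blast
  have pnn: "\<And>k. k \<in> {1..K} \<Longrightarrow> 0 \<le> ?p k" using assms(4) by blast
  have wpos: "\<And>C mu. C \<in> I \<Longrightarrow> 0 \<le> mu \<Longrightarrow> 0 < w C + mu"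
    using assms(10,11) by (metis add_pos_nonneg)
  have Iin: "\<And>D C. C \<in> I \<Longrightarrow> D \<subseteq> {1..K} - Y0 \<Longrightarrow> card D = card C \<Longrightarrow> D \<in> I"
    unfolding I_def by auto
  have wcard: "\<And>D C. C \<in> I \<Longrightarrow> D \<in> I \<Longrightarrow> card D = card C \<Longrightarrow> w D = w C"
    using assms(11) by simp
  have fin1: "finite C1" and fin2: "finite C2" using finI C1I C2I by auto
  have mu2: "0 \<le> mu2" using assms(12,13) by linarith
  show False
  proof (cases "card C1 \<le> card C2")
    case True
    obtain a where a: "a \<in> C1" "a \<notin> C2" using nsub by blast
    have "C2 - C1 \<noteq> {}"
    proof
      assume "C2 - C1 = {}"
      then have "C2 \<subseteq> C1" by blast
      then have "C2 = C1" using True fin1 card_subset_eq by (metis card_mono le_antisym)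
      then show False using a by blast
    qed
    then obtain b where b: "b \<in> C2" "b \<notin> C1" by blast
    have ab: "a \<noteq> b" using a b by blast
    define D1 where "D1 = insert b (C1 - {a})"
    define D2 where "D2 = insert a (C2 - {b})"
    have s1: "C1 \<subseteq> {1..K} - Y0" and s2: "C2 \<subseteq> {1..K} - Y0" using C1I C2I unfolding I_def by auto
    have cD1: "card D1 = card C1" unfolding D1_def using fin1 a b
      by (simp add: card_insert_if) (metis One_nat_def Suc_pred card_gt_0_iff empty_iff)
    have cD2: "card D2 = card C2" unfolding D2_def using fin2 a b
      by (simp add: card_insert_if) (metis One_nat_def Suc_pred card_gt_0_iff empty_iff)
    have D1I: "D1 \<in> I" using Iin[OF C1I _ cD1] s1 s2 a b unfolding D1_def by blast
    have D2I: "D2 \<in> I" using Iin[OF C2I _ cD2] s1 s2 a b unfolding D2_def by blast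
    have pD1: "pC ?p D1 = pC ?p C1 - ?p a + ?p b" unfolding D1_def pC_def using fin1 a b
      by (simp add: sum_diff1)
    have pD2: "pC ?p D2 = pC ?p C2 - ?p b + ?p a" unfolding D2_def pC_def using fin2 a b
      by (simp add: sum_diff1)
    have n1: "D1 \<noteq> C1" using b unfolding D1_def by blast
    have n2: "D2 \<noteq> C2" using a unfolding D2_def by blast
    note h1 = samesize[OF assms(14) D1I n1 wcard[OF C1I D1I cD1] wpos[OF C1I assms(12)]]
    note h2 = samesize[OF assms(15) D2I n2 wcard[OF C2I D2I cD2] wpos[OF C2I mu2]]
    have l1: "lex_less C1 D1" and l2: "lex_less C2 D2" using h1 h2 pD1 pD2 by auto
    show False
    proof (cases "b < a")
      case True
      have "lex_less D1 C1" unfolding D1_def by (rule lex_swap) (use fin1 a b True in auto)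
      then show False using l1 lex_asym by blast
    next
      case False
      then have "a < b" using ab by linarith
      have "lex_less D2 C2" unfolding D2_def by (rule lex_swap) (use fin2 a b \<open>a < b\<close> in auto)
      then show False using l2 lex_asym by blast
    qed
  next
    case False
    have "card C1 - card C2 \<le> card (C1 - C2)" by (rule diff_card_le_card_Diff) (rule fin2)
    then obtain X where X: "X \<subseteq> C1 - C2" "card X = card C1 - card C2"
      using obtain_subset_with_card_n by metis
    have finX: "finite X" using X fin1 finite_subset by blast
    define E where "E = C2 \<union> X"
    have cE: "card E = card C1" unfolding E_def using X finX fin2 False
      by (subst card_Un_disjoint) auto
    have s1: "C1 \<subseteq> {1..K} - Y0" and s2: "C2 \<subseteq> {1..K} - Y0" using C1I C2I unfolding I_def by auto
    have EI: "E \<in> I" using Iin[OF C1I _ cE] s1 s2 X unfolding E_def by blast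
    have pE: "pC ?p E = pC ?p C2 + pC ?p X" unfolding E_def pC_def using X finX fin2
      by (subst sum.union_disjoint) auto
    have pX: "0 \<le> pC ?p X" unfolding pC_def using X s1 pnn by (intro sum_nonneg) blast
    have "pC ?p E \<le> pC ?p C1"
    proof (cases "E = C1")
      case False
      show ?thesis using samesize[OF assms(14) EI False wcard[OF C1I EI cE] wpos[OF C1I assms(12)]] by auto
    qed simp
    then have pp: "pC ?p C2 \<le> pC ?p C1" using pE pX by linarith
    have ne: "C2 \<noteq> C1" using False by auto
    have ne': "C1 \<noteq> C2" using False by auto
    note t1 = c1[THEN conjunct2, rule_format, OF C2I ne]
    note t2 = c2[THEN conjunct2, rule_format, OF C1I ne']
    define d where "d = (\<lambda>mu. ell w ?p alpha mu C1 - ell w ?p alpha mu C2)"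
    have dd: "d mu2 - d mu1 = (mu2 - mu1) * (pC ?p C1 - pC ?p C2)"
      unfolding d_def ell_def by (simp add: algebra_simps)
    have "0 \<le> (mu2 - mu1) * (pC ?p C1 - pC ?p C2)" using pp assms(13) by simp
    moreover have "0 \<le> d mu1" using t1 unfolding d_def by auto
    moreover have "d mu2 \<le> 0" using t2 unfolding d_def by auto
    ultimately have "d mu1 = 0" "d mu2 = 0" using dd by linarith+
    then have "w C1 < w C2 \<or> (w C1 = w C2 \<and> lex_less C1 C2)"
      "w C2 < w C1 \<or> (w C2 = w C1 \<and> lex_less C2 C1)"
      using t1 t2 unfolding d_def by auto
    then show False using lex_asym by force
  qed
qed

end
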